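(* Fix $a_1,a_2,b_1,b_2>0$, $p_1,p_2\in(0,1)$, $q_1,q_2>1$, integers $n_1,n_2\ge1$ and exponents $\eta_{i,j}>0$ ($i=1,2$, $j\in\{1,\dots,n_i\}$), and suppose $\eta_{1,i}\eta_{2,j}\in[p_2,q_2]$ for all $i\in\{1,\dots,n_1\}$, $j\in\{1,\dots,n_2\}$ and $\frac{\max_j\eta_{2,j}}{\min_k\eta_{2,k}}\le\frac{q_2}{p_2}$. For $i=1,2$ let $\alpha_i(s)=a_is^{p_i}+b_is^{q_i}$. Then there exists $C>0$ such that for all coefficients $c_{i,j}>0$, setting $\sigma_i(s)=\sum_{j=1}^{n_i}c_{i,j}s^{\eta_{i,j}}$, $\gamma_i:=\alpha_i^{-1}\circ\sigma_i$ and $c_i:=\max_jc_{i,j}$: if $c_2\max_kc_1^{\eta_{2,k}}<C$, then there exist $\hat\gamma_1\in\mathcal{K}^{\mathcal{P}}$ and $\hat\gamma_2\in\mathcal{K}^{\mathcal{P}^{-1}}$ such that $\hat\gamma_i(s)>\gamma_i(s)$ for $i=1,2$ and $\hat\gamma_1\circ\hat\gamma_2(s)<s$ for all $s>0$.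
   Context: $\mathcal{K}_\infty$: continuous strictly increasing unbounded $\alpha:\mathbb{R}_{\ge0}\to\mathbb{R}_{\ge0}$ with $\alpha(0)=0$. $\mathcal{K}^{\mathcal{P}}$: the $\alpha\in\mathcal{K}_\infty$ of the form $\sum_{i=1}^nc_is^{p_i}$ with real $c_i\ne0$, $p_i>0$, and $\alpha'(s)>0$ for $s>0$. $\mathcal{K}^{\mathcal{P}^{-1}}$: the $\alpha\in\mathcal{K}_\infty$ with $\alpha^{-1}\in\mathcal{K}^{\mathcal{P}}$. *)

theory Defs
  imports "HOL-Analysis.Analysis"
begin

text \<open>Class K-infinity, for functions on the nonnegative reals (values at negative
arguments are irrelevant).\<close>
definition K_inf :: "(real \<Rightarrow> real) \<Rightarrow> bool" where
  "K_inf \<alpha> \<longleftrightarrow> continuous_on {0..} \<alpha> \<and> strict_mono_on {0..} \<alpha> \<and> \<alpha> 0 = 0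
     \<and> (\<forall>s\<ge>0. \<alpha> s \<ge> 0) \<and> (\<forall>M. \<exists>s\<ge>0. \<alpha> s > M)"

definition KP :: "(real \<Rightarrow> real) \<Rightarrow> bool" where
  "KP \<alpha> \<longleftrightarrow> K_inf \<alpha>
     \<and> (\<exists>(n::nat) (c::nat \<Rightarrow> real) (p::nat \<Rightarrow> real).
          (\<forall>i\<in>{1..n}. c i \<noteq> 0 \<and> p i > 0)
          \<and> (\<forall>s\<ge>0. \<alpha> s = (\<Sum>i=1..n. c i * s powr p i)))
     \<and> (\<forall>s>0. \<exists>d>0. (\<alpha> has_real_derivative d) (at s))"

definition KPinv :: "(real \<Rightarrow> real) \<Rightarrow> bool" where
  "KPinv \<alpha> \<longleftrightarrow> K_inf \<alpha> \<and> KP (the_inv_into {0..} \<alpha>)"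

definition alphaf :: "real \<Rightarrow> real \<Rightarrow> real \<Rightarrow> real \<Rightarrow> real \<Rightarrow> real" where
  "alphaf a b p q s = a * s powr p + b * s powr q"

end

theory Submission imports Defs begin

lemma Kinf_powsum:
  fixes c e :: "'i \<Rightarrow> real"
  assumes fin: "finite I" and ne: "I \<noteq> {}" and pos: "\<forall>i\<in>I. c i > 0 \<and> e i > 0"
  shows "K_inf (\<lambda>s. \<Sum>i\<in>I. c i * s powr e i)"
  unfolding K_inf_def
proof (intro conjI allI impI)
  show "continuous_on {0..} (\<lambda>s. \<Sum>i\<in>I. c i * s powr e i)"
    using pos by (intro continuous_on_sum continuous_on_mult continuous_on_const continuous_on_powr' continuous_on_id) auto
  show "strict_mono_on {0..} (\<lambda>s. \<Sum>i\<in>I. c i * s powr e i)"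
  proof (rule strict_mono_onI)
    fix r s :: real assume "r \<in> {0..}" "s \<in> {0..}" "r < s"
    then show "(\<Sum>i\<in>I. c i * r powr e i) < (\<Sum>i\<in>I. c i * s powr e i)"
      using pos by (intro sum_strict_mono[OF fin ne]) (auto intro: powr_less_mono2)
  qed
  show "(\<Sum>i\<in>I. c i * 0 powr e i) = 0" by simp
  fix s :: real assume "0 \<le> s"
  then show "0 \<le> (\<Sum>i\<in>I. c i * s powr e i)" using pos by (intro sum_nonneg) auto
next
  fix M :: real
  obtain i where i: "i \<in> I" using ne by auto
  define s where "s = ((\<bar>M\<bar> + 1) / c i) powr (1 / e i)"
  have ci: "c i > 0" "e i > 0" using pos i by auto
  have s0: "s \<ge> 0" unfolding s_def by simp
  have "s powr e i = (\<bar>M\<bar> + 1) / c i"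
    unfolding s_def using ci by (simp add: powr_powr)
  hence "c i * s powr e i = \<bar>M\<bar> + 1" using ci by simp
  moreover have "c i * s powr e i \<le> (\<Sum>i\<in>I. c i * s powr e i)"
    using pos s0 i fin by (intro member_le_sum) auto
  ultimately show "\<exists>s\<ge>0. M < (\<Sum>i\<in>I. c i * s powr e i)" using s0 by (intro exI[of _ s]) auto
qed

lemma KP_powsum:
  fixes c e :: "nat \<Rightarrow> real"
  assumes n: "n \<ge> 1" and pos: "\<forall>i\<in>{1..n}. c i > 0 \<and> e i > 0"
  shows "KP (\<lambda>s. \<Sum>i=1..n. c i * s powr e i)"
  unfolding KP_def
proof (intro conjI allI impI)
  show "K_inf (\<lambda>s. \<Sum>i=1..n. c i * s powr e i)"
    using n pos by (intro Kinf_powsum) auto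
  show "\<exists>n' (c'::nat\<Rightarrow>real) p. (\<forall>i\<in>{1..n'}. c' i \<noteq> 0 \<and> p i > 0) \<and>
     (\<forall>s\<ge>0. (\<Sum>i=1..n. c i * s powr e i) = (\<Sum>i=1..n'. c' i * s powr p i))"
    using pos by (intro exI[of _ n] exI[of _ c] exI[of _ e]) auto
  fix s :: real assume s: "0 < s"
  have "((\<lambda>s. \<Sum>i=1..n. c i * s powr e i) has_real_derivative (\<Sum>i=1..n. c i * (e i * s powr (e i - 1)))) (at s)"
    using s by (intro DERIV_sum DERIV_cmult has_real_derivative_powr)
  moreover have "(\<Sum>i=1..n. c i * (e i * s powr (e i - 1))) > 0"
    using pos s n by (intro sum_pos) auto
  ultimately show "\<exists>d>0. ((\<lambda>s. \<Sum>i=1..n. c i * s powr e i) has_real_derivative d) (at s)" by blast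
qed

lemma Kinf_surj:
  assumes "K_inf f" "y \<ge> 0"
  shows "\<exists>x\<ge>0. f x = y"
proof -
  obtain s where s: "s \<ge> 0" "f s > y" using assms unfolding K_inf_def by blast
  have "continuous_on {0..s} f" using assms unfolding K_inf_def by (auto intro: continuous_on_subset)
  then obtain x where "x \<ge> 0" "x \<le> s" "f x = y"
    using IVT'[of f 0 y s] s assms unfolding K_inf_def by auto
  thus ?thesis by auto
qed

lemma Kinf_inj: "K_inf f \<Longrightarrow> inj_on f {0..}"
  unfolding K_inf_def using strict_mono_on_imp_inj_on by blast

lemma Kinf_mono: "K_inf f \<Longrightarrow> 0 \<le> x \<Longrightarrow> x \<le> y \<Longrightarrow> f x \<le> f y"
  unfolding K_inf_def by (metis atLeast_iff dual_order.trans order.order_iff_strict strict_mono_onD)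

lemma Kinf_less_iff: "K_inf f \<Longrightarrow> 0 \<le> x \<Longrightarrow> 0 \<le> y \<Longrightarrow> f x < f y \<longleftrightarrow> x < y"
  by (metis Kinf_mono K_inf_def atLeast_iff not_less strict_mono_onD)

lemma Kinf_inv:
  assumes "K_inf f" "y \<ge> 0"
  shows "the_inv_into {0..} f y \<ge> 0 \<and> f (the_inv_into {0..} f y) = y"
proof -
  obtain x where "x \<ge> 0" "f x = y" using Kinf_surj assms by blast
  then have "y \<in> f ` {0..}" by auto
  then show ?thesis using Kinf_inj[OF assms(1)]
    using the_inv_into_into[of f "{0..}" y "{0..}"] by (simp add: f_the_inv_into_f)
qed

lemma Kinf_inv_f:
  assumes "K_inf f" "x \<ge> 0"
  shows "the_inv_into {0..} f (f x) = x"
  using the_inv_into_f_f[OF Kinf_inj[OF assms(1)]] assms(2) by simp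

lemma Kinf_inv_Kinf:
  assumes f: "K_inf f"
  shows "K_inf (the_inv_into {0..} f)"
proof -
  define g where "g = the_inv_into {0..} f"
  have gi: "\<And>y. y \<ge> 0 \<Longrightarrow> g y \<ge> 0 \<and> f (g y) = y" unfolding g_def using Kinf_inv[OF f] by blast
  have fg: "\<And>x. x \<ge> 0 \<Longrightarrow> g (f x) = x" unfolding g_def using Kinf_inv_f[OF f] by blast
  have fpos: "\<And>x. x \<ge> 0 \<Longrightarrow> f x \<ge> 0" using f unfolding K_inf_def by auto
  have lt: "\<And>x y. 0 \<le> x \<Longrightarrow> 0 \<le> y \<Longrightarrow> f x < f y \<longleftrightarrow> x < y" using Kinf_less_iff[OF f] by blast
  have "continuous_on {0..} g"
    unfolding continuous_on_iff
  proof (intro ballI allI impI)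
    fix y e :: real assume y: "y \<in> {0..}" and e: "0 < e"
    define x where "x = g y"
    have x: "x \<ge> 0" "f x = y" using gi y unfolding x_def by auto
    define d1 where "d1 = f (x + e) - y"
    have d1: "d1 > 0" unfolding d1_def using lt[of x "x+e"] x e by auto
    define d2 where "d2 = (if x \<ge> e then y - f (x - e) else 1)"
    have d2: "d2 > 0" unfolding d2_def using lt[of "x-e" x] x e by auto
    show "\<exists>d>0. \<forall>y'\<in>{0..}. dist y' y < d \<longrightarrow> dist (g y') (g y) < e"
    proof (intro exI[of _ "min d1 d2"] conjI ballI impI)
      show "0 < min d1 d2" using d1 d2 by simp
      fix y' :: real assume y': "y' \<in> {0..}" and dy: "dist y' y < min d1 d2"
      have g': "g y' \<ge> 0" "f (g y') = y'" using gi y' by auto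
      have "f (g y') < f (x + e)" using g' dy unfolding d1_def dist_real_def by auto
      hence up: "g y' < x + e" using lt[of "g y'" "x+e"] g' x e by auto
      have lo: "x - e < g y'"
      proof (cases "x \<ge> e")
        case True
        then have "f (x - e) < f (g y')" using g' dy unfolding d2_def dist_real_def by auto
        then show ?thesis using lt[of "x - e" "g y'"] g' True by auto
      next
        case False then show ?thesis using g' by auto
      qed
      show "dist (g y') (g y) < e" using up lo unfolding dist_real_def x_def by auto
    qed
  qed
  moreover have "strict_mono_on {0..} g"
  proof (rule strict_mono_onI)
    fix r s :: real assume "r \<in> {0..}" "s \<in> {0..}" "r < s"
    then show "g r < g s" using gi[of r] gi[of s] lt[of "g r" "g s"] by auto
  qed
  moreover have "g 0 = 0" using fg[of 0] f unfolding K_inf_def by simp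
  moreover have "\<forall>s\<ge>0. g s \<ge> 0" using gi by auto
  moreover have "\<forall>M. \<exists>s\<ge>0. g s > M"
  proof
    fix M :: real
    show "\<exists>s\<ge>0. g s > M" using fg[of "\<bar>M\<bar>+1"] fpos[of "\<bar>M\<bar>+1"]
      by (intro exI[of _ "f (\<bar>M\<bar>+1)"]) auto
  qed
  ultimately show ?thesis unfolding K_inf_def g_def by blast
qed

lemma KP_cong:
  assumes "KP h" "\<And>x. x \<ge> 0 \<Longrightarrow> f x = h x"
  shows "KP f"
proof -
  have K: "K_inf h" using assms unfolding KP_def by blast
  have "K_inf f"
    using K assms(2) unfolding K_inf_def
    apply (intro conjI)
    subgoal by (metis atLeast_iff continuous_on_cong)
    subgoal unfolding strict_mono_on_def by auto
    subgoal by auto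
    subgoal by auto
    by (metis)
  moreover have "\<exists>(n::nat) (c::nat \<Rightarrow> real) (p::nat \<Rightarrow> real).
          (\<forall>i\<in>{1..n}. c i \<noteq> 0 \<and> p i > 0)
          \<and> (\<forall>s\<ge>0. f s = (\<Sum>i=1..n. c i * s powr p i))"
    using assms unfolding KP_def by auto
  moreover have "\<forall>s>0. \<exists>d>0. (f has_real_derivative d) (at s)"
  proof (intro allI impI)
    fix s :: real assume s: "s > 0"
    then obtain d where "d > 0" "(h has_real_derivative d) (at s)" using assms unfolding KP_def by blast
    moreover have "(f has_real_derivative d) (at s)"
      by (rule has_field_derivative_transform_within_open[OF calculation(2), of "{0<..}"])
         (use s assms(2) in auto)
    ultimately show "\<exists>d>0. (f has_real_derivative d) (at s)" by blast
  qed
  ultimately show ?thesis unfolding KP_def by blast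
qed

lemma alpha_eq: "alphaf a b p q = (\<lambda>s. \<Sum>i\<in>{0::nat,1}. (if i = 0 then a else b) * s powr (if i = 0 then p else q))"
  unfolding alphaf_def by auto

lemma alpha_Kinf: "a > 0 \<Longrightarrow> b > 0 \<Longrightarrow> p > 0 \<Longrightarrow> q > 0 \<Longrightarrow> K_inf (alphaf a b p q)"
  unfolding alpha_eq by (rule Kinf_powsum) auto

lemma alpha_lower:
  assumes "a > 0" "b > 0" "0 < p" "p < 1" "q > 1" "v \<ge> 0"
  shows "min a b * v \<le> alphaf a b p q v"
proof (cases "v \<le> 1")
  case True
  have "v powr 1 \<le> v powr p" using powr_mono'[of p 1 v] True assms by auto
  hence "v \<le> v powr p" using assms by simp
  hence "min a b * v \<le> a * v powr p" using assms by (meson min.cobounded1 mult_mono order_trans less_imp_le)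
  then show ?thesis unfolding alphaf_def using assms by (smt (verit) mult_nonneg_nonneg powr_ge_zero)
next
  case False
  have "v powr 1 \<le> v powr q" using powr_mono[of 1 q v] False assms by auto
  hence "v \<le> v powr q" using assms by simp
  hence "min a b * v \<le> b * v powr q" using assms by (meson min.cobounded2 mult_mono order_trans less_imp_le)
  then show ?thesis unfolding alphaf_def using assms by (smt (verit) mult_nonneg_nonneg powr_ge_zero)
qed
lemma pow_bound:
  fixes u e p q :: real
  assumes "u > 0" "p \<le> e" "e \<le> q"
  shows "u powr e \<le> u powr p + u powr q"
proof (cases "u \<le> 1")
  case True
  then have "u powr e \<le> u powr p" using powr_mono'[of p e u] assms by auto
  then show ?thesis by (smt (verit) powr_ge_zero)
next
  case False
  then have "u powr e \<le> u powr q" using powr_mono[of e q u] assms by auto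
  then show ?thesis by (smt (verit) powr_ge_zero)
qed

lemma key:
  fixes c2 \<eta>1 \<eta>2 :: "nat \<Rightarrow> real" and u B cm1 cm2 Mc a2 b2 p2 q2 :: real
  assumes u: "u > 0" and B: "B > 0" and cm1: "cm1 > 0"
    and a2: "a2 > 0" "b2 > 0"
    and e1: "\<forall>j\<in>{1..n1}. \<eta>1 j > 0" and e2: "\<forall>j\<in>{1..n2}. \<eta>2 j > 0"
    and ee: "\<forall>i\<in>{1..n1}. \<forall>j\<in>{1..n2}. p2 \<le> \<eta>1 i * \<eta>2 j \<and> \<eta>1 i * \<eta>2 j \<le> q2"
    and c2: "\<forall>j\<in>{1..n2}. c2 j > 0 \<and> c2 j \<le> cm2"
    and Mc: "\<forall>k\<in>{1..n2}. cm1 powr \<eta>2 k \<le> Mc"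
    and n2: "n2 \<ge> 1"
    and small: "cm2 * Mc * (\<Sum>k=1..n2. (B * real n1) powr \<eta>2 k) < min a2 b2"
  shows "(\<Sum>k=1..n2. c2 k * (\<Sum>j=1..n1. (B * cm1) * u powr \<eta>1 j) powr \<eta>2 k) < alphaf a2 b2 p2 q2 u"
proof -
  define T where "T = u powr p2 + u powr q2"
  have T: "T > 0" unfolding T_def using u by (smt (verit) powr_gt_zero)
  define S where "S = (\<Sum>j=1..n1. u powr \<eta>1 j)"
  have S0: "S \<ge> 0" unfolding S_def by (intro sum_nonneg) auto
  have hS: "(\<Sum>j=1..n1. (B * cm1) * u powr \<eta>1 j) = (B * cm1) * S"
    unfolding S_def by (simp add: sum_distrib_left)
  have bnd: "c2 k * ((B * cm1) * S) powr \<eta>2 k \<le> cm2 * (B * real n1) powr \<eta>2 k * Mc * T"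
    if k: "k \<in> {1..n2}" for k
  proof -
    have ek: "\<eta>2 k > 0" using e2 k by auto
    have uj: "u powr \<eta>1 j \<le> T powr (1 / \<eta>2 k)" if j: "j \<in> {1..n1}" for j
    proof -
      have "u powr (\<eta>1 j * \<eta>2 k) \<le> T" unfolding T_def
        using ee j k u by (intro pow_bound) auto
      hence "(u powr (\<eta>1 j * \<eta>2 k)) powr (1 / \<eta>2 k) \<le> T powr (1 / \<eta>2 k)"
        using ek by (intro powr_mono2) auto
      moreover have "(u powr (\<eta>1 j * \<eta>2 k)) powr (1 / \<eta>2 k) = u powr \<eta>1 j"
        using ek by (simp add: powr_powr)
      ultimately show ?thesis by simp
    qed
    have "S \<le> of_nat (card {1..n1}) * T powr (1 / \<eta>2 k)"
      unfolding S_def by (rule sum_bounded_above) (use uj in auto)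
    hence SN: "S \<le> real n1 * T powr (1 / \<eta>2 k)" by simp
    have "((B * cm1) * S) powr \<eta>2 k = (B * cm1) powr \<eta>2 k * S powr \<eta>2 k"
      using B cm1 S0 by (simp add: powr_mult)
    also have "S powr \<eta>2 k \<le> (real n1 * T powr (1 / \<eta>2 k)) powr \<eta>2 k"
      using SN S0 ek by (intro powr_mono2) auto
    also have "(real n1 * T powr (1 / \<eta>2 k)) powr \<eta>2 k = real n1 powr \<eta>2 k * T"
      using T ek by (simp add: powr_mult powr_powr)
    finally have "((B * cm1) * S) powr \<eta>2 k \<le> (B * cm1) powr \<eta>2 k * (real n1 powr \<eta>2 k * T)"
      using B cm1 by (simp add: mult_left_mono)
    also have "\<dots> = (B * real n1) powr \<eta>2 k * cm1 powr \<eta>2 k * T"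
      using B cm1 by (simp add: powr_mult)
    also have "\<dots> \<le> (B * real n1) powr \<eta>2 k * Mc * T"
      using Mc k T by (intro mult_right_mono mult_left_mono) auto
    finally have X: "((B * cm1) * S) powr \<eta>2 k \<le> (B * real n1) powr \<eta>2 k * Mc * T" .
    have "c2 k * ((B * cm1) * S) powr \<eta>2 k \<le> cm2 * ((B * real n1) powr \<eta>2 k * Mc * T)"
      using c2 k X by (intro mult_mono) auto
    then show ?thesis by (simp add: mult_ac)
  qed
  have "(\<Sum>k=1..n2. c2 k * (\<Sum>j=1..n1. (B * cm1) * u powr \<eta>1 j) powr \<eta>2 k)
      \<le> (\<Sum>k=1..n2. cm2 * (B * real n1) powr \<eta>2 k * Mc * T)"
    unfolding hS by (rule sum_mono) (use bnd in auto)
  also have "\<dots> = cm2 * Mc * (\<Sum>k=1..n2. (B * real n1) powr \<eta>2 k) * T"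
    by (simp add: sum_distrib_left sum_distrib_right mult_ac)
  also have "\<dots> < min a2 b2 * T" using small T by simp
  also have "\<dots> \<le> alphaf a2 b2 p2 q2 u" unfolding T_def alphaf_def using a2 u
    by (smt (verit, ccfv_SIG) distrib_left min.cobounded1 min.cobounded2 mult_right_mono powr_ge_zero)
  finally show ?thesis .
qed

theorem lemma10:
  fixes a1 a2 b1 b2 p1 p2 q1 q2 :: real
    and n1 n2 :: nat
    and \<eta>1 \<eta>2 :: "nat \<Rightarrow> real"
  assumes "a1 > 0" "a2 > 0" "b1 > 0" "b2 > 0"
    and "0 < p1" "p1 < 1" "0 < p2" "p2 < 1" "q1 > 1" "q2 > 1"
    and "n1 \<ge> 1" "n2 \<ge> 1"
    and "\<forall>j\<in>{1..n1}. \<eta>1 j > 0" "\<forall>j\<in>{1..n2}. \<eta>2 j > 0"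
    and "\<forall>i\<in>{1..n1}. \<forall>j\<in>{1..n2}. p2 \<le> \<eta>1 i * \<eta>2 j \<and> \<eta>1 i * \<eta>2 j \<le> q2"
    and "Max (\<eta>2 ` {1..n2}) / Min (\<eta>2 ` {1..n2}) \<le> q2 / p2"
  shows "\<exists>C>0. \<forall>c1 c2 :: nat \<Rightarrow> real.
           (\<forall>j\<in>{1..n1}. c1 j > 0) \<longrightarrow> (\<forall>j\<in>{1..n2}. c2 j > 0) \<longrightarrow>
           (let \<sigma>1 = (\<lambda>s. \<Sum>j=1..n1. c1 j * s powr \<eta>1 j);
                \<sigma>2 = (\<lambda>s. \<Sum>j=1..n2. c2 j * s powr \<eta>2 j);
                \<gamma>1 = the_inv_into {0..} (alphaf a1 b1 p1 q1) \<circ> \<sigma>1;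
                \<gamma>2 = the_inv_into {0..} (alphaf a2 b2 p2 q2) \<circ> \<sigma>2;
                cm1 = Max (c1 ` {1..n1});
                cm2 = Max (c2 ` {1..n2})
            in cm2 * Max ((\<lambda>k. cm1 powr \<eta>2 k) ` {1..n2}) < C \<longrightarrow>
               (\<exists>g1 g2. KP g1 \<and> KPinv g2 \<and>
                  (\<forall>s>0. g1 s > \<gamma>1 s \<and> g2 s > \<gamma>2 s \<and> g1 (g2 s) < s)))"
proof -
  note as = assms
  define mA where "mA = min a1 b1"
  have mA: "mA > 0" unfolding mA_def using as by simp
  define B where "B = 4 / mA"
  have B: "B > 0" unfolding B_def using mA by simp
  define S0 where "S0 = (\<Sum>k=1..n2. (B * real n1) powr \<eta>2 k)"
  have S0: "S0 > 0" unfolding S0_def using as B by (intro sum_pos) auto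
  define C where "C = min a2 b2 / S0"
  have C: "C > 0" unfolding C_def using S0 as by simp
  have A1: "K_inf (alphaf a1 b1 p1 q1)" using as by (intro alpha_Kinf) auto
  have A2: "K_inf (alphaf a2 b2 p2 q2)" using as by (intro alpha_Kinf) auto
  show ?thesis
  proof (intro exI[of _ C] conjI C allI impI)
    fix c1 c2 :: "nat \<Rightarrow> real"
    assume c1: "\<forall>j\<in>{1..n1}. c1 j > 0" and c2: "\<forall>j\<in>{1..n2}. c2 j > 0"
    define \<sigma>1 where "\<sigma>1 = (\<lambda>s. \<Sum>j=1..n1. c1 j * s powr \<eta>1 j)"
    define \<sigma>2 where "\<sigma>2 = (\<lambda>s. \<Sum>j=1..n2. c2 j * s powr \<eta>2 j)"
    define cm1 where "cm1 = Max (c1 ` {1..n1})"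
    define cm2 where "cm2 = Max (c2 ` {1..n2})"
    define Mc where "Mc = Max ((\<lambda>k. cm1 powr \<eta>2 k) ` {1..n2})"
    have cm1le: "\<And>j. j \<in> {1..n1} \<Longrightarrow> c1 j \<le> cm1" unfolding cm1_def by auto
    have cm2le: "\<And>j. j \<in> {1..n2} \<Longrightarrow> c2 j \<le> cm2" unfolding cm2_def by auto
    have cm1: "cm1 > 0" using cm1le[of 1] c1 as by force
    have Mcle: "\<forall>k\<in>{1..n2}. cm1 powr \<eta>2 k \<le> Mc" unfolding Mc_def by auto
    have S2K: "K_inf \<sigma>2" unfolding \<sigma>2_def using c2 as by (intro Kinf_powsum) auto
    define h where "h = (\<lambda>s. \<Sum>j=1..n1. (B * cm1) * s powr \<eta>1 j)"
    define g1 where "g1 = (\<lambda>s. \<Sum>j=1..n1. (B * cm1 / 2) * s powr \<eta>1 j)"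
    define g2 where "g2 = the_inv_into {0..} h"
    have g1h: "\<And>s. g1 s = h s / 2" unfolding g1_def h_def by (simp add: sum_divide_distrib)
    have KPh: "KP h" unfolding h_def using as B cm1 by (intro KP_powsum) auto
    have KPg1: "KP g1" unfolding g1_def using as B cm1 by (intro KP_powsum) auto
    have Kh: "K_inf h" using KPh unfolding KP_def by blast
    have Kg2: "K_inf g2" unfolding g2_def by (rule Kinf_inv_Kinf[OF Kh])
    have KPg2: "KPinv g2" unfolding KPinv_def
    proof (intro conjI Kg2)
      show "KP (the_inv_into {0..} g2)"
      proof (rule KP_cong[OF KPh])
        fix x :: real assume x: "x \<ge> 0"
        have "g2 (h x) = x" unfolding g2_def using Kinf_inv_f[OF Kh x] .
        moreover have "h x \<ge> 0" using Kh x unfolding K_inf_def by auto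
        ultimately show "the_inv_into {0..} g2 x = h x" using Kinf_inv_f[OF Kg2, of "h x"] by simp
      qed
    qed
    show "let \<sigma>1 = (\<lambda>s. \<Sum>j=1..n1. c1 j * s powr \<eta>1 j);
                \<sigma>2 = (\<lambda>s. \<Sum>j=1..n2. c2 j * s powr \<eta>2 j);
                \<gamma>1 = the_inv_into {0..} (alphaf a1 b1 p1 q1) \<circ> \<sigma>1;
                \<gamma>2 = the_inv_into {0..} (alphaf a2 b2 p2 q2) \<circ> \<sigma>2;
                cm1 = Max (c1 ` {1..n1});
                cm2 = Max (c2 ` {1..n2})
            in cm2 * Max ((\<lambda>k. cm1 powr \<eta>2 k) ` {1..n2}) < C \<longrightarrow>
               (\<exists>g1 g2. KP g1 \<and> KPinv g2 \<and>
                  (\<forall>s>0. g1 s > \<gamma>1 s \<and> g2 s > \<gamma>2 s \<and> g1 (g2 s) < s))"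
      unfolding Let_def \<sigma>1_def[symmetric] \<sigma>2_def[symmetric] cm1_def[symmetric] cm2_def[symmetric]
        Mc_def[symmetric]
    proof (rule impI, rule exI[of _ g1], rule exI[of _ g2], intro conjI KPg1 KPg2 allI impI)
      assume small0: "cm2 * Mc < C"
      have small: "cm2 * Mc * S0 < min a2 b2" using small0 S0 unfolding C_def
        by (simp add: pos_less_divide_eq)
      have keyh: "\<sigma>2 (h u) < alphaf a2 b2 p2 q2 u" if u: "u > 0" for u
        unfolding \<sigma>2_def h_def
        by (rule key[OF u B cm1 as(2) as(4) as(13) as(14) as(15) _ Mcle as(12)])
           (use c2 cm2le small S0_def in auto)
      fix s :: real
      assume s: "0 < s"
      show "(the_inv_into {0..} (alphaf a1 b1 p1 q1) \<circ> \<sigma>1) s < g1 s"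
      proof -
        define v where "v = the_inv_into {0..} (alphaf a1 b1 p1 q1) (\<sigma>1 s)"
        have s1: "\<sigma>1 s \<ge> 0" unfolding \<sigma>1_def using c1 s by (intro sum_nonneg) (auto simp: less_imp_le)
        have v: "v \<ge> 0" "alphaf a1 b1 p1 q1 v = \<sigma>1 s" using Kinf_inv[OF A1 s1] unfolding v_def by auto
        have "mA * v \<le> \<sigma>1 s" using alpha_lower[of a1 b1 p1 q1 v] as v unfolding mA_def by auto
        also have "\<sigma>1 s \<le> (\<Sum>j=1..n1. cm1 * s powr \<eta>1 j)"
          unfolding \<sigma>1_def by (rule sum_mono) (use cm1le in \<open>auto intro: mult_right_mono\<close>)
        finally have "v \<le> (\<Sum>j=1..n1. cm1 * s powr \<eta>1 j) / mA" using mA by (simp add: field_simps)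
        also have "\<dots> < g1 s"
        proof -
          have P: "(\<Sum>j=1..n1. cm1 * s powr \<eta>1 j) > 0" using cm1 s as by (intro sum_pos) auto
          have "g1 s = (\<Sum>j=1..n1. cm1 * s powr \<eta>1 j) * (2 / mA)"
            unfolding g1_def sum_distrib_right by (rule sum.cong) (auto simp: B_def field_simps)
          then show ?thesis using P mA by (simp add: field_simps)
        qed
        finally show "(the_inv_into {0..} (alphaf a1 b1 p1 q1) \<circ> \<sigma>1) s < g1 s" unfolding v_def by simp
      qed
      show "(the_inv_into {0..} (alphaf a2 b2 p2 q2) \<circ> \<sigma>2) s < g2 s"
      proof -
        define v where "v = the_inv_into {0..} (alphaf a2 b2 p2 q2) (\<sigma>2 s)"
        have s2: "\<sigma>2 s > 0" unfolding \<sigma>2_def using c2 s as by (intro sum_pos) auto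
        have v: "v \<ge> 0" "alphaf a2 b2 p2 q2 v = \<sigma>2 s" using Kinf_inv[OF A2, of "\<sigma>2 s"] s2 unfolding v_def by auto
        have v0: "v > 0" using v s2 A2 unfolding K_inf_def by (metis order_less_le order_less_irrefl)
        have x: "g2 s \<ge> 0" "h (g2 s) = s" using Kinf_inv[OF Kh, of s] s unfolding g2_def by auto
        have "v < g2 s"
        proof (rule ccontr)
          assume "\<not> v < g2 s"
          hence "g2 s \<le> v" by simp
          hence "s \<le> h v" using Kinf_mono[OF Kh x(1)] x by metis
          hence "\<sigma>2 s \<le> \<sigma>2 (h v)" using Kinf_mono[OF S2K] s by auto
          moreover have "\<sigma>2 (h v) < alphaf a2 b2 p2 q2 v" using keyh v0 by blast
          ultimately show False using v by simp
        qed
        then show "(the_inv_into {0..} (alphaf a2 b2 p2 q2) \<circ> \<sigma>2) s < g2 s" unfolding v_def by simp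
      qed
      show "g1 (g2 s) < s"
      proof -
        have "h (g2 s) = s" using Kinf_inv[OF Kh, of s] s unfolding g2_def by auto
        then show "g1 (g2 s) < s" using g1h[of "g2 s"] s by simp
      qed
    qed
  qed
qed

end
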